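(* There exists a task in the two-party one-way communication (Holevo–Frenkel–Weiner) scenario for which, with no pre-shared correlation, the utility of communicating one qubit is greater than that of communicating one polygon system: there exist finite sets $\mathcal{X},\mathcal{B}$ and a payoff function $\beta$ such that for every $n\ge3$, $\sup_{P\in\mathcal{Q}}\beta(P)>\sup_{P\in\mathcal{P}_n}\beta(P)$.
   Context: Scenario: Alice receives an input $x$ from a finite set $\mathcal{X}$, Bob must output $b$ from a finite set $\mathcal{B}$; a correlation is $P=(P(b|x))$, a task is a real payoff function $\beta$ on correlations, and the utility of a resource is $\sup\beta(P)$ over correlations achievable with it. $\mathcal{Q}$: correlations $P(b|x)=\operatorname{Tr}(\rho_x\pi_b)$ with each $\rho_x$ a density operator on $\mathbb{C}^2$ and $\{\pi_b\}$ a POVM on $\mathbb{C}^2$. Polygon model $n$: with $r_n=\sqrt{\sec(\pi/n)}$, the state space $\Omega(n)\subset\mathbb{R}^3$ is the convex hull of $\omega_i=(r_n\cos(2\pi i/n),r_n\sin(2\pi i/n),1)^{\mathrm T}$, $i=1,\dots,n$. The effect space $\mathcal{E}(n)$ is the convex hull of $z=(0,0,0)^{\mathrm T}$, $u=(0,0,1)^{\mathrm T}$, and $e_i,\bar e_i=u-e_i$ ($i=1,\dots,n$), where for odd $n$, $e_i=\frac{1}{1+r_n^2}(r_n\cos\frac{2\pi i}{n},r_n\sin\frac{2\pi i}{n},1)^{\mathrm T}$, and for even $n$, $e_i=\frac12(r_n\cos\frac{(2i-1)\pi}{n},r_n\sin\frac{(2i-1)\pi}{n},1)^{\mathrm T}$.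 A measurement is a family $\{f_b\}_{b\in\mathcal{B}}\subset\mathcal{E}(n)$ with $\sum_b f_b=u$, and the probability of outcome $b$ on state $\omega$ is $f_b^{\mathrm T}\omega$. $\mathcal{P}_n$ (one polygon-$n$ system, no shared correlation): correlations $P(b|x)=f_b^{\mathrm T}s_x$ with $s_x\in\Omega(n)$ and $\{f_b\}$ a measurement. *)

theory Defs
  imports "HOL-Analysis.Analysis"
begin

text \<open>Inputs are x < k (the finite set X = {0..<k}), outputs b < m (B = {0..<m}).
  A correlation is P :: nat => nat => real, with P x b the probability of b given x;
  entries outside X x B are fixed to 0 so that correlations correspond one-to-one to
  the functions on X x B.\<close>

definition in_range :: "nat \<Rightarrow> nat \<Rightarrow> (nat \<Rightarrow> nat \<Rightarrow> real) \<Rightarrow> bool" where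
  "in_range k m P \<longleftrightarrow> (\<forall>x b. \<not> (x < k \<and> b < m) \<longrightarrow> P x b = 0)"

definition psd2 :: "complex^2^2 \<Rightarrow> bool" where
  "psd2 A \<longleftrightarrow> (\<forall>v::complex^2. (\<Sum>i\<in>UNIV. cnj (v$i) * (A *v v)$i) \<in> \<real> \<and>
                  0 \<le> Re (\<Sum>i\<in>UNIV. cnj (v$i) * (A *v v)$i))"

definition density2 :: "complex^2^2 \<Rightarrow> bool" where
  "density2 \<rho> \<longleftrightarrow> psd2 \<rho> \<and> trace \<rho> = 1"

definition povm2 :: "nat \<Rightarrow> (nat \<Rightarrow> complex^2^2) \<Rightarrow> bool" where
  "povm2 m \<pi> \<longleftrightarrow> (\<forall>b<m. psd2 (\<pi> b)) \<and> (\<Sum>b<m. \<pi> b) = mat 1"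

definition qubit_corr :: "nat \<Rightarrow> nat \<Rightarrow> (nat \<Rightarrow> nat \<Rightarrow> real) set" where
  "qubit_corr k m = {P. in_range k m P \<and>
     (\<exists>\<rho> \<pi>. (\<forall>x<k. density2 (\<rho> x)) \<and> povm2 m \<pi> \<and>
        (\<forall>x<k. \<forall>b<m. complex_of_real (P x b) = trace (\<rho> x ** \<pi> b)))}"

definition r_poly :: "nat \<Rightarrow> real" where
  "r_poly n = sqrt (1 / cos (pi / real n))"

definition omega_poly :: "nat \<Rightarrow> nat \<Rightarrow> real^3" where
  "omega_poly n i = vector [r_poly n * cos (2 * pi * real i / real n),
                            r_poly n * sin (2 * pi * real i / real n), 1]"

definition states_poly :: "nat \<Rightarrow> (real^3) set" where
  "states_poly n = convex hull (omega_poly n ` {1..n})"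

definition u_poly :: "real^3" where
  "u_poly = vector [0, 0, 1]"

definition e_poly :: "nat \<Rightarrow> nat \<Rightarrow> real^3" where
  "e_poly n i = (if odd n then
      (1 / (1 + (r_poly n)\<^sup>2)) *\<^sub>R vector [r_poly n * cos (2 * pi * real i / real n),
                                         r_poly n * sin (2 * pi * real i / real n), 1]
    else
      (1 / 2) *\<^sub>R vector [r_poly n * cos ((2 * real i - 1) * pi / real n),
                         r_poly n * sin ((2 * real i - 1) * pi / real n), 1])"

definition effects_poly :: "nat \<Rightarrow> (real^3) set" where
  "effects_poly n = convex hull ({0, u_poly} \<union> e_poly n ` {1..n}
                                   \<union> (\<lambda>i. u_poly - e_poly n i) ` {1..n})"

definition measurement_poly :: "nat \<Rightarrow> nat \<Rightarrow> (nat \<Rightarrow> real^3) \<Rightarrow> bool" where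
  "measurement_poly n m f \<longleftrightarrow> (\<forall>b<m. f b \<in> effects_poly n) \<and> (\<Sum>b<m. f b) = u_poly"

definition polygon_corr :: "nat \<Rightarrow> nat \<Rightarrow> nat \<Rightarrow> (nat \<Rightarrow> nat \<Rightarrow> real) set" where
  "polygon_corr n k m = {P. in_range k m P \<and>
     (\<exists>s f. (\<forall>x<k. s x \<in> states_poly n) \<and> measurement_poly n m f \<and>
        (\<forall>x<k. \<forall>b<m. P x b = f b \<bullet> s x))}"

definition utility :: "((nat \<Rightarrow> nat \<Rightarrow> real) \<Rightarrow> real) \<Rightarrow> (nat \<Rightarrow> nat \<Rightarrow> real) set \<Rightarrow> ereal" where
  "utility \<beta> C = (SUP P\<in>C. ereal (\<beta> P))"

end

theory Submission
  imports Defs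
begin

definition det4 :: "(nat \<Rightarrow> nat \<Rightarrow> real) \<Rightarrow> real" where
 "det4 M = M 0 0 * M 1 1 * M 2 2 * M 3 3 - M 0 0 * M 1 1 * M 2 3 * M 3 2 - M 0 0 * M 1 2 * M 2 1 * M 3 3 + M 0 0 * M 1 2 * M 2 3 * M 3 1 + M 0 0 * M 1 3 * M 2 1 * M 3 2 - M 0 0 * M 1 3 * M 2 2 * M 3 1 - M 0 1 * M 1 0 * M 2 2 * M 3 3 + M 0 1 * M 1 0 * M 2 3 * M 3 2 + M 0 1 * M 1 2 * M 2 0 * M 3 3 - M 0 1 * M 1 2 * M 2 3 * M 3 0 - M 0 1 * M 1 3 * M 2 0 * M 3 2 + M 0 1 * M 1 3 * M 2 2 * M 3 0 + M 0 2 * M 1 0 * M 2 1 * M 3 3 - M 0 2 * M 1 0 * M 2 3 * M 3 1 - M 0 2 * M 1 1 * M 2 0 * M 3 3 + M 0 2 * M 1 1 * M 2 3 * M 3 0 + M 0 2 * M 1 3 * M 2 0 * M 3 1 - M 0 2 * M 1 3 * M 2 1 * M 3 0 - M 0 3 * M 1 0 * M 2 1 * M 3 2 + M 0 3 * M 1 0 * M 2 2 * M 3 1 + M 0 3 * M 1 1 * M 2 0 * M 3 2 - M 0 3 * M 1 1 * M 2 2 * M 3 0 - M 0 3 * M 1 2 * M 2 0 * M 3 1 + M 0 3 * M 1 2 * M 2 1 * M 3 0"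

lemma rank3:
  fixes f s :: "nat \<Rightarrow> real^3"
  shows "det4 (\<lambda>i j. f j \<bullet> s i) = 0"
  unfolding det4_def inner_vec_def sum_3 inner_real_def by algebra

lemma det4_cong:
  assumes "\<And>i j. i < 4 \<Longrightarrow> j < 4 \<Longrightarrow> M i j = N i j"
  shows "det4 M = det4 N"
  unfolding det4_def by (simp add: assms)

definition proj :: "complex \<Rightarrow> complex^2 \<Rightarrow> complex^2^2" where
  "proj c \<psi> = (\<chi> i j. c * \<psi>$i * cnj (\<psi>$j))"

lemma psd_proj:
  assumes "0 \<le> c"
  shows "psd2 (proj (complex_of_real c) \<psi>)"
  unfolding psd2_def
proof
  fix v :: "complex^2"
  define w where "w = cnj (\<psi>$1) * v$1 + cnj (\<psi>$2) * v$2"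
  have e: "(\<Sum>i\<in>UNIV. cnj (v$i) * (proj (complex_of_real c) \<psi> *v v)$i)
      = complex_of_real c * (cnj w * w)"
    unfolding proj_def matrix_vector_mult_def w_def
    by (simp add: sum_2 algebra_simps)
  have "cnj w * w = complex_of_real ((cmod w)\<^sup>2)"
    using complex_norm_square[of w] by (simp add: mult.commute)
  then have e2: "(\<Sum>i\<in>UNIV. cnj (v$i) * (proj (complex_of_real c) \<psi> *v v)$i)
      = complex_of_real (c * (cmod w)\<^sup>2)" using e by simp
  show "(\<Sum>i\<in>UNIV. cnj (v$i) * (proj (complex_of_real c) \<psi> *v v)$i) \<in> \<real> \<and>
        0 \<le> Re (\<Sum>i\<in>UNIV. cnj (v$i) * (proj (complex_of_real c) \<psi> *v v)$i)"
    unfolding e2 using assms by simp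
qed


definition rho0 :: "nat \<Rightarrow> complex^2^2" where
  "rho0 x = (if x = 0 then proj 1 (vector [1, 0]) else if x = 1 then proj 1 (vector [0, 1])
     else if x = 2 then proj (1/2) (vector [1, 1]) else proj (1/2) (vector [1, \<i>]))"

definition pi0 :: "nat \<Rightarrow> complex^2^2" where
  "pi0 b = (if b = 0 then proj (1/3) (vector [1, 0]) else if b = 1 then proj (1/3) (vector [0, 1])
     else if b = 2 then proj (1/6) (vector [1, 1]) else if b = 3 then proj (1/6) (vector [1, -1])
     else if b = 4 then proj (1/6) (vector [1, \<i>]) else proj (1/6) (vector [1, -\<i>]))"

definition tab :: "real list list" where
  "tab = [[1,0,1/2,1/2,1/2,1/2],[0,1,1/2,1/2,1/2,1/2],[1/2,1/2,1,0,1/2,1/2],[1/2,1/2,1/2,1/2,1,0]]"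

definition P0 :: "nat \<Rightarrow> nat \<Rightarrow> real" where
  "P0 x b = (if x < 4 \<and> b < 6 then tab ! x ! b / 3 else 0)"

definition col :: "nat \<Rightarrow> nat" where
  "col j = [0,1,2,4] ! j"

definition beta0 :: "(nat \<Rightarrow> nat \<Rightarrow> real) \<Rightarrow> real" where
  "beta0 P = \<bar>det4 (\<lambda>i j. P i (col j))\<bar>"

lemma lt4: "x < (4::nat) \<Longrightarrow> x = 0 \<or> x = 1 \<or> x = 2 \<or> x = 3" by auto
lemma lt6: "x < (6::nat) \<Longrightarrow> x = 0 \<or> x = 1 \<or> x = 2 \<or> x = 3 \<or> x = 4 \<or> x = 5" by auto


lemma rho0_density: "density2 (rho0 x)"
proof -
  have a: "psd2 (proj 1 v)" for v using psd_proj[of 1 v] by simp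
  have b: "psd2 (proj (1/2) v)" for v using psd_proj[of "1/2" v] by simp
  have "psd2 (rho0 x)" unfolding rho0_def using a b by simp
  moreover have "trace (rho0 x) = 1"
    unfolding rho0_def proj_def trace_def by (simp add: sum_2)
  ultimately show ?thesis unfolding density2_def by simp
qed

lemma pi0_povm: "povm2 6 pi0"
proof -
  have a: "psd2 (proj (1/3) v)" for v using psd_proj[of "1/3" v] by simp
  have b: "psd2 (proj (1/6) v)" for v using psd_proj[of "1/6" v] by simp
  have "psd2 (pi0 b)" for b unfolding pi0_def using a b by simp
  moreover have "(\<Sum>b<6. pi0 b) = mat 1"
    unfolding vec_eq_iff forall_2
    by (simp add: pi0_def proj_def numeral_eq_Suc mat_def)
  ultimately show ?thesis unfolding povm2_def by simp
qed

lemma P0_trace: "x < 4 \<Longrightarrow> b < 6 \<Longrightarrow> complex_of_real (P0 x b) = trace (rho0 x ** pi0 b)"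
  apply (drule lt4, drule lt6)
  apply (elim disjE)
  apply (simp_all add: P0_def tab_def rho0_def pi0_def proj_def trace_def matrix_matrix_mult_def sum_2)
  done

lemma P0_qubit: "P0 \<in> qubit_corr 4 6"
  unfolding qubit_corr_def mem_Collect_eq
proof
  show "in_range 4 6 P0" unfolding in_range_def P0_def by auto
  show "\<exists>\<rho> \<pi>. (\<forall>x<4. density2 (\<rho> x)) \<and> povm2 6 \<pi> \<and>
        (\<forall>x<4. \<forall>b<6. complex_of_real (P0 x b) = trace (\<rho> x ** \<pi> b))"
    using rho0_density pi0_povm P0_trace by blast
qed

lemma beta0_P0: "beta0 P0 > 0"
  unfolding beta0_def det4_def P0_def col_def tab_def by simp

lemma beta0_poly: "P \<in> polygon_corr n 4 6 \<Longrightarrow> beta0 P = 0"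
proof -
  assume "P \<in> polygon_corr n 4 6"
  then obtain s f where h: "\<forall>x<4. \<forall>b<6. P x b = (f b :: real^3) \<bullet> s x"
    unfolding polygon_corr_def mem_Collect_eq by metis
  have "det4 (\<lambda>i j. P i (col j)) = det4 (\<lambda>i j. f (col j) \<bullet> s i)"
  proof (rule det4_cong)
    fix i j :: nat assume "i < 4" "j < 4"
    moreover have "col j < 6" using \<open>j < 4\<close> by (auto simp: col_def dest!: lt4)
    ultimately show "P i (col j) = f (col j) \<bullet> s i" using h by simp
  qed
  also have "\<dots> = 0" using rank3[of "\<lambda>j. f (col j)" s] by simp
  finally show ?thesis unfolding beta0_def by simp
qed

theorem theorem5:
  shows "\<exists>(k::nat) (m::nat) (\<beta>::(nat \<Rightarrow> nat \<Rightarrow> real) \<Rightarrow> real).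
           \<forall>n::nat. n \<ge> 3 \<longrightarrow> utility \<beta> (qubit_corr k m) > utility \<beta> (polygon_corr n k m)"
proof (intro exI allI impI)
  fix n :: nat
  have "utility beta0 (polygon_corr n 4 6) \<le> ereal 0"
    unfolding utility_def by (rule SUP_least) (simp add: beta0_poly)
  also have "ereal 0 < ereal (beta0 P0)" using beta0_P0 by simp
  also have "\<dots> \<le> utility beta0 (qubit_corr 4 6)"
    unfolding utility_def by (rule SUP_upper) (rule P0_qubit)
  finally show "utility beta0 (polygon_corr n 4 6) < utility beta0 (qubit_corr 4 6)" .
qed

end
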